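(* Let $j\in\{1,\ldots,d\}$ and let $A,B\subseteq\mathbb{R}^d$ be compactly $j$-generated cones with $(A\cap B)\setminus\{0\}\neq\emptyset$. Then $A\cap B$ is compactly $j$-generated and $\sigma_j(A\cap B)=\sigma_j(A)\cap\sigma_j(B)$.
   Context: For $A\subseteq\mathbb{R}^d$ and $j\in\{1,\ldots,d\}$, $\sigma_j(A)=\{x=(x^1,\ldots,x^d)\in A: x^j=1\}$. A cone $A\subseteq\mathbb{R}^d$ is compactly $j$-generated if $\sigma_j(A)$ is compact and non-empty and $A=\{\lambda x:\lambda\ge0,\ x\in\sigma_j(A)\}$. *)

theory Defs
  imports "HOL-Analysis.Analysis"
begin

definition sigma_slice :: "'n::finite \<Rightarrow> (real ^ 'n) set \<Rightarrow> (real ^ 'n) set" where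
  "sigma_slice j A = {x \<in> A. x $ j = 1}"

definition compactly_generated :: "'n::finite \<Rightarrow> (real ^ 'n) set \<Rightarrow> bool" where
  "compactly_generated j A \<longleftrightarrow>
     cone A \<and> compact (sigma_slice j A) \<and> sigma_slice j A \<noteq> {} \<and>
     A = {c *\<^sub>R x | c x. c \<ge> 0 \<and> x \<in> sigma_slice j A}"

end

theory Submission
  imports Defs
begin

lemma cg_pos:
  assumes "compactly_generated j A" "y \<in> A" "y \<noteq> 0"
  shows "y $ j > 0 \<and> (1 / (y $ j)) *\<^sub>R y \<in> sigma_slice j A"
proof -
  from assms(1,2) obtain c x where cx: "y = c *\<^sub>R x" "c \<ge> 0" "x \<in> sigma_slice j A"
    unfolding compactly_generated_def by blast
  have xj: "x $ j = 1" "x \<in> A" using cx(3) by (auto simp: sigma_slice_def)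
  have "c \<noteq> 0" using cx assms(3) by auto
  hence c: "c > 0" using cx by auto
  have yj: "y $ j = c" using cx xj by simp
  have "(1 / (y $ j)) *\<^sub>R y = x" using c cx yj by simp
  thus ?thesis using c yj cx by simp
qed

theorem lemmaA1:
  fixes j :: "'n::finite" and A B :: "(real ^ 'n) set"
  assumes "compactly_generated j A" and "compactly_generated j B"
    and "(A \<inter> B) - {0} \<noteq> {}"
  shows "compactly_generated j (A \<inter> B) \<and>
         sigma_slice j (A \<inter> B) = sigma_slice j A \<inter> sigma_slice j B"
proof -
  have eq: "sigma_slice j (A \<inter> B) = sigma_slice j A \<inter> sigma_slice j B"
    by (auto simp: sigma_slice_def)
  have cA: "cone A" and cB: "cone B" using assms(1,2) by (auto simp: compactly_generated_def)
  have cone: "cone (A \<inter> B)" using cA cB by (auto simp: cone_def)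
  have comp: "compact (sigma_slice j (A \<inter> B))" unfolding eq
    using assms(1,2) by (auto simp: compactly_generated_def intro: compact_Int)
  from assms(3) obtain y where y: "y \<in> A" "y \<in> B" "y \<noteq> 0" by auto
  have ne: "sigma_slice j (A \<inter> B) \<noteq> {}" unfolding eq
    using cg_pos[OF assms(1) y(1,3)] cg_pos[OF assms(2) y(2,3)] by blast
  then obtain s where s: "s \<in> sigma_slice j (A \<inter> B)" by auto
  have gen: "A \<inter> B = {c *\<^sub>R x | c x. c \<ge> 0 \<and> x \<in> sigma_slice j (A \<inter> B)}"
  proof
    show "A \<inter> B \<subseteq> {c *\<^sub>R x | c x. c \<ge> 0 \<and> x \<in> sigma_slice j (A \<inter> B)}"
    proof
      fix z assume z: "z \<in> A \<inter> B"
      show "z \<in> {c *\<^sub>R x | c x. c \<ge> 0 \<and> x \<in> sigma_slice j (A \<inter> B)}"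
      proof (cases "z = 0")
        case True
        then show ?thesis using s by (intro CollectI exI[of _ 0] exI[of _ s]) auto
      next
        case False
        have p: "z $ j > 0 \<and> (1 / (z $ j)) *\<^sub>R z \<in> sigma_slice j A"
             "(1 / (z $ j)) *\<^sub>R z \<in> sigma_slice j B"
          using cg_pos[OF assms(1) _ False] cg_pos[OF assms(2) _ False] z by auto
        have "z = (z $ j) *\<^sub>R ((1 / (z $ j)) *\<^sub>R z)" using p by simp
        then show ?thesis using p eq
          by (intro CollectI exI[of _ "z $ j"] exI[of _ "(1 / (z $ j)) *\<^sub>R z"]) auto
      qed
    qed
  next
    show "{c *\<^sub>R x | c x. c \<ge> 0 \<and> x \<in> sigma_slice j (A \<inter> B)} \<subseteq> A \<inter> B"
      using cone by (auto simp: cone_def sigma_slice_def)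
  qed
  show ?thesis using eq cone comp ne gen by (simp add: compactly_generated_def)
qed

end
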